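(* Assume (SH). Let $x\in\operatorname{dom}f$ and let $0<\rho_t\le1$, $t\in T$, satisfy $\inf_{t\in T}\rho_tf_t(x)>-\infty$. Then \[ \partial f(x)\subset\bigcap_{\varepsilon>0}\overline{\operatorname{co}}\Big(\Big(\bigcup_{t\in T(x)}\partial_\varepsilon f_t(x)\Big)\cup\Big(\bigcup_{t\in T\setminus T(x)}\varepsilon\,\partial_\varepsilon(\rho_tf_t)(x)\Big)\Big). \] Moreover, if $f$ attains its minimum at $x$, this inclusion is an equality.
   Context: $X$ is a real separated locally convex space with dual $X^*$ carrying the weak$^*$ topology. $T$ is a nonempty index set, $\{f_t: t\in T\}$ are proper convex lsc functions $X\to\mathbb{R}\cup\{+\infty\}$, $f:=\sup_{t\in T}f_t$. $T(x):=\{t\in T: f_t(x)=f(x)\}$ (active indices). $\partial_\varepsilon g(x)=\{x^*:\ g(y)\ge g(x)+\langle x^*,y-x\rangle-\varepsilon\ \forall y\}$ if $g(x)\in\mathbb{R}$, $\varepsilon\ge0$ (empty otherwise), $\partial=\partial_0$; $\varepsilon A=\{\varepsilon a:a\in A\}$. $\overline{\operatorname{co}}$ is the weak$^*$-closed convex hull. (SH): $T$ is compact Hausdorff and $t\mapsto f_t(z)$ is upper semicontinuous on $T$ for each $z\in X$. *)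

theory Defs
  imports "HOL-Analysis.Analysis"
begin

text \<open>A real separated locally convex space is modelled as a real vector space of
type 'a whose topology is generated by a family P of seminorms.\<close>

definition seminorm :: "('a::real_vector \<Rightarrow> real) \<Rightarrow> bool" where
  "seminorm p \<longleftrightarrow> (\<forall>x y. p (x + y) \<le> p x + p y) \<and> (\<forall>c x. p (c *\<^sub>R x) = \<bar>c\<bar> * p x)"

definition lcs :: "('a::real_vector \<Rightarrow> real) set \<Rightarrow> bool" where
  "lcs P \<longleftrightarrow> (\<forall>p\<in>P. seminorm p) \<and> (\<forall>x. x \<noteq> 0 \<longrightarrow> (\<exists>p\<in>P. p x > 0))"

definition lc_nbhd :: "('a::real_vector \<Rightarrow> real) set \<Rightarrow> real \<Rightarrow> 'a \<Rightarrow> 'a set" where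
  "lc_nbhd F e x = {y. \<forall>p\<in>F. p (y - x) < e}"

definition lc_open :: "('a::real_vector \<Rightarrow> real) set \<Rightarrow> 'a set \<Rightarrow> bool" where
  "lc_open P U \<longleftrightarrow> (\<forall>x\<in>U. \<exists>F e. finite F \<and> F \<subseteq> P \<and> e > 0 \<and> lc_nbhd F e x \<subseteq> U)"

definition lc_lsc :: "('a::real_vector \<Rightarrow> real) set \<Rightarrow> ('a \<Rightarrow> ereal) \<Rightarrow> bool" where
  "lc_lsc P g \<longleftrightarrow> (\<forall>c::ereal. lc_open P {y. c < g y})"

definition lc_dual :: "('a::real_vector \<Rightarrow> real) set \<Rightarrow> ('a \<Rightarrow> real) set" where
  "lc_dual P = {\<phi>. linear \<phi> \<and> lc_open P {y. \<bar>\<phi> y\<bar> < 1}}"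

definition proper_fun :: "('a \<Rightarrow> ereal) \<Rightarrow> bool" where
  "proper_fun g \<longleftrightarrow> (\<forall>x. g x \<noteq> -\<infinity>) \<and> (\<exists>x. g x \<noteq> \<infinity>)"

definition convex_fun :: "('a::real_vector \<Rightarrow> ereal) \<Rightarrow> bool" where
  "convex_fun g \<longleftrightarrow> (\<forall>x y u. 0 \<le> u \<and> u \<le> 1 \<longrightarrow>
      g (u *\<^sub>R x + (1 - u) *\<^sub>R y) \<le> ereal u * g x + ereal (1 - u) * g y)"

definition eps_subdiff :: "('a::real_vector \<Rightarrow> real) set \<Rightarrow> real \<Rightarrow> ('a \<Rightarrow> ereal) \<Rightarrow> 'a \<Rightarrow> ('a \<Rightarrow> real) set" where
  "eps_subdiff P e g x = (if \<bar>g x\<bar> \<noteq> \<infinity> then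
      {\<phi> \<in> lc_dual P. \<forall>y. g x + ereal (\<phi> (y - x)) - ereal e \<le> g y} else {})"

definition wstar_closed :: "('a::real_vector \<Rightarrow> real) set \<Rightarrow> ('a \<Rightarrow> real) set \<Rightarrow> bool" where
  "wstar_closed P C \<longleftrightarrow> C \<subseteq> lc_dual P \<and>
     (\<forall>\<phi>\<in>lc_dual P. (\<forall>(F::'a set) e. finite F \<and> e > 0 \<longrightarrow> (\<exists>\<psi>\<in>C. \<forall>z\<in>F. \<bar>\<phi> z - \<psi> z\<bar> < e)) \<longrightarrow> \<phi> \<in> C)"

definition fconvex :: "('a \<Rightarrow> real) set \<Rightarrow> bool" where
  "fconvex C \<longleftrightarrow> (\<forall>\<phi>\<in>C. \<forall>\<psi>\<in>C. \<forall>u::real. 0 \<le> u \<and> u \<le> 1 \<longrightarrow> (\<lambda>z. u * \<phi> z + (1 - u) * \<psi> z) \<in> C)"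

definition wstar_clco :: "('a::real_vector \<Rightarrow> real) set \<Rightarrow> ('a \<Rightarrow> real) set \<Rightarrow> ('a \<Rightarrow> real) set" where
  "wstar_clco P A = \<Inter>{C. fconvex C \<and> wstar_closed P C \<and> A \<subseteq> C}"

definition fscale :: "real \<Rightarrow> ('a \<Rightarrow> real) set \<Rightarrow> ('a \<Rightarrow> real) set" where
  "fscale e A = (\<lambda>\<phi>. (\<lambda>z. e * \<phi> z)) ` A"

end

theory Submission
  imports Defs "HOL-Analysis.Analysis" "HOL-Library.Function_Algebras"
begin

definition sublin :: "('b::real_vector \<Rightarrow> real) \<Rightarrow> bool" where
  "sublin p \<longleftrightarrow> (\<forall>x y. p (x+y) \<le> p x + p y) \<and> (\<forall>c x. c \<ge> 0 \<longrightarrow> p (c *\<^sub>R x) = c * p x)"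

definition hbgood :: "('b::real_vector \<Rightarrow> real) \<Rightarrow> 'b \<Rightarrow> ('b \<times> real) set \<Rightarrow> bool" where
  "hbgood p z1 G \<longleftrightarrow> (\<forall>u a v b. (u,a)\<in>G \<longrightarrow> (v,b)\<in>G \<longrightarrow> (u+v,a+b)\<in>G)
     \<and> (\<forall>c u a. (u,a)\<in>G \<longrightarrow> (c *\<^sub>R u, c*a)\<in>G) \<and> (\<forall>a. (0,a)\<in>G \<longrightarrow> a = 0)
     \<and> (z1,1)\<in>G \<and> (\<forall>u a. (u,a)\<in>G \<longrightarrow> a \<le> p u)"

lemma hbgood_fun:
  assumes "hbgood p z1 G" "(u,a)\<in>G" "(u,b)\<in>G" shows "a = b"
proof -
  have "(u + (-1) *\<^sub>R u, a + (-1)*b) \<in> G" using assms unfolding hbgood_def by blast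
  then show ?thesis using assms unfolding hbgood_def by auto
qed

lemma hbgood_extend:
  assumes g: "hbgood p z1 M" and sp: "sublin p" and y: "y \<notin> fst ` M"
  shows "\<exists>G. hbgood p z1 G \<and> M \<subseteq> G \<and> G \<noteq> M"
proof -
  have add: "\<And>u a v b. (u,a)\<in>M \<Longrightarrow> (v,b)\<in>M \<Longrightarrow> (u+v,a+b)\<in>M"
    and scl: "\<And>c u a. (u,a)\<in>M \<Longrightarrow> (c *\<^sub>R u, c*a)\<in>M"
    and z0: "\<And>a. (0,a)\<in>M \<Longrightarrow> a = 0"
    and z1: "(z1,1)\<in>M" and dom: "\<And>u a. (u,a)\<in>M \<Longrightarrow> a \<le> p u"
    using g unfolding hbgood_def by blast+
  have padd: "\<And>x y. p (x+y) \<le> p x + p y" and phom: "\<And>c x. c \<ge> 0 \<Longrightarrow> p (c *\<^sub>R x) = c * p x"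
    using sp unfolding sublin_def by blast+
  have M00: "(0,0) \<in> M" using scl[OF z1, of 0] by simp
  define S where "S = {b - p (v - y) | v b. (v,b)\<in>M}"
  define c where "c = Sup S"
  have Sne: "S \<noteq> {}" using M00 S_def by blast
  have up: "\<And>u a. (u,a)\<in>M \<Longrightarrow> s \<in> S \<Longrightarrow> s \<le> p (u + y) - a" for s
  proof -
    fix u a assume ua: "(u,a)\<in>M" and "s \<in> S"
    then obtain v b where vb: "(v,b)\<in>M" "s = b - p (v - y)" using S_def by blast
    have "a + b \<le> p (u + v)" using dom[OF add[OF ua vb(1)]] .
    also have "\<dots> \<le> p (u+y) + p (v - y)" using padd[of "u+y" "v-y"] by (simp add: algebra_simps)
    finally show "s \<le> p (u + y) - a" using vb by simp
  qed
  have bdd: "bdd_above S" using up[OF M00] by (auto simp: bdd_above_def)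
  have c1: "\<And>v b. (v,b)\<in>M \<Longrightarrow> b - p (v - y) \<le> c"
    unfolding c_def by (rule cSup_upper[OF _ bdd]) (auto simp: S_def)
  have c2: "\<And>u a. (u,a)\<in>M \<Longrightarrow> c \<le> p (u + y) - a"
    unfolding c_def by (rule cSup_least[OF Sne]) (rule up)
  define G where "G = {(u + t *\<^sub>R y, a + t * c) | u a t. (u,a)\<in>M}"
  have dom': "a + t * c \<le> p (u + t *\<^sub>R y)" if ua: "(u,a)\<in>M" for u a t
  proof (cases "t > 0")
    case True
    have "((1/t) *\<^sub>R u, (1/t) * a) \<in> M" using scl[OF ua] .
    from c2[OF this] have "c + a / t \<le> p ((1/t) *\<^sub>R u + y)" by simp
    hence "t * (c + a/t) \<le> t * p ((1/t) *\<^sub>R u + y)" using True by simp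
    also have "\<dots> = p (t *\<^sub>R ((1/t) *\<^sub>R u + y))" using phom[of t] True by simp
    also have "t *\<^sub>R ((1/t) *\<^sub>R u + y) = u + t *\<^sub>R y" using True by (simp add: scaleR_add_right)
    finally show ?thesis using True by (simp add: algebra_simps)
  next
    case False
    show ?thesis
    proof (cases "t = 0")
      case True then show ?thesis using dom[OF ua] by simp
    next
      case False
      define s where "s = - t"
      have s: "s > 0" using False \<open>\<not> t > 0\<close> s_def by simp
      have "((1/s) *\<^sub>R u, (1/s) * a) \<in> M" using scl[OF ua] .
      from c1[OF this] have "a / s - c \<le> p ((1/s) *\<^sub>R u - y)" by simp
      hence "s * (a/s - c) \<le> s * p ((1/s) *\<^sub>R u - y)" using s by simp
      also have "\<dots> = p (s *\<^sub>R ((1/s) *\<^sub>R u - y))" using phom[of s] s by simp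
      also have "s *\<^sub>R ((1/s) *\<^sub>R u - y) = u + t *\<^sub>R y" using s s_def by (simp add: scaleR_diff_right)
      finally show ?thesis using s s_def by (simp add: algebra_simps)
    qed
  qed
  have "hbgood p z1 G"
    unfolding hbgood_def
  proof (intro conjI allI impI)
    fix u a v b assume "(u,a)\<in>G" "(v,b)\<in>G"
    then obtain u1 a1 t1 u2 a2 t2 where h: "(u1,a1)\<in>M" "(u2,a2)\<in>M" "u = u1 + t1 *\<^sub>R y" "a = a1 + t1*c"
      "v = u2 + t2 *\<^sub>R y" "b = a2 + t2 * c" unfolding G_def by blast
    have "(u1+u2, a1+a2)\<in>M" using add h by blast
    moreover have "u + v = (u1+u2) + (t1+t2) *\<^sub>R y" "a + b = (a1+a2) + (t1+t2)*c"
      using h by (simp_all add: algebra_simps)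
    ultimately show "(u+v,a+b)\<in>G" unfolding G_def by blast
  next
    fix r u a assume "(u,a)\<in>G"
    then obtain u1 a1 t1 where h: "(u1,a1)\<in>M" "u = u1 + t1 *\<^sub>R y" "a = a1 + t1*c"
      unfolding G_def by blast
    have "(r *\<^sub>R u1, r*a1)\<in>M" using scl h by blast
    moreover have "r *\<^sub>R u = r *\<^sub>R u1 + (r*t1) *\<^sub>R y" "r * a = r*a1 + (r*t1)*c"
      using h by (simp_all add: algebra_simps)
    ultimately show "(r *\<^sub>R u, r*a)\<in>G" unfolding G_def by blast
  next
    fix a assume "(0,a)\<in>G"
    then obtain u1 a1 t1 where h: "(u1,a1)\<in>M" "0 = u1 + t1 *\<^sub>R y" "a = a1 + t1*c"
      unfolding G_def by blast
    show "a = 0"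
    proof (cases "t1 = 0")
      case True then show ?thesis using h z0 by simp
    next
      case False
      have "((-1/t1) *\<^sub>R u1, (-1/t1)*a1) \<in> M" using scl h by blast
      moreover have "(-1/t1) *\<^sub>R u1 = y"
      proof -
        have "u1 = - (t1 *\<^sub>R y)" using h(2) by (simp add: eq_neg_iff_add_eq_0)
        then show ?thesis using False by simp
      qed
      ultimately have "y \<in> fst ` M" by force
      then show ?thesis using y by simp
    qed
  next
    show "(z1,1)\<in>G" unfolding G_def using z1 by force
  next
    fix u a assume "(u,a)\<in>G"
    then obtain u1 a1 t1 where h: "(u1,a1)\<in>M" "u = u1 + t1 *\<^sub>R y" "a = a1 + t1*c"
      unfolding G_def by blast
    show "a \<le> p u" using dom'[OF h(1)] h by simp
  qed
  moreover have "M \<subseteq> G" unfolding G_def by force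
  moreover have "(y, c) \<in> G" unfolding G_def using M00 by force
  ultimately show ?thesis using y by force
qed

lemma hahn_banach:
  fixes p :: "'b::real_vector \<Rightarrow> real"
  assumes sp: "sublin p" and nz: "z1 \<noteq> 0" and le: "\<And>t. t \<le> p (t *\<^sub>R z1)"
  shows "\<exists>L. linear L \<and> (\<forall>z. L z \<le> p z) \<and> L z1 = 1"
proof -
  define A where "A = {G. hbgood p z1 G}"
  define G0 where "G0 = {(t *\<^sub>R z1, t) | t. True}"
  have "hbgood p z1 G0"
    unfolding hbgood_def
  proof (intro conjI allI impI)
    fix u a v b assume "(u, a) \<in> G0" "(v, b) \<in> G0"
    then show "(u + v, a + b) \<in> G0" unfolding G0_def by clarsimp (metis scaleR_add_left)
  next
    fix c u a assume "(u, a) \<in> G0"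
    then show "(c *\<^sub>R u, c * a) \<in> G0" unfolding G0_def by auto
  next
    fix a assume "(0, a) \<in> G0"
    then show "a = 0" using nz unfolding G0_def by auto
  next
    show "(z1, 1) \<in> G0" unfolding G0_def by (auto intro: exI[of _ 1])
  next
    fix u a assume "(u, a) \<in> G0"
    then show "a \<le> p u" using le unfolding G0_def by auto
  qed
  then have G0: "G0 \<in> A" unfolding A_def by simp
  have "\<exists>M\<in>A. \<forall>X\<in>A. M \<subseteq> X \<longrightarrow> X = M"
  proof (rule Zorn_Lemma2, intro ballI)
    fix C assume C: "C \<in> chains A"
    show "\<exists>U\<in>A. \<forall>X\<in>C. X \<subseteq> U"
    proof (cases "C = {}")
      case True then show ?thesis using G0 by blast
    next
      case False
      have CA: "C \<subseteq> A" and ch: "\<And>X Y. X\<in>C \<Longrightarrow> Y\<in>C \<Longrightarrow> X \<subseteq> Y \<or> Y \<subseteq> X"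
        using C unfolding chains_def chain_subset_def by blast+
      have "hbgood p z1 (\<Union>C)" unfolding hbgood_def
      proof (intro conjI allI impI)
        fix u a v b assume "(u, a) \<in> \<Union>C" "(v, b) \<in> \<Union>C"
        then obtain X Y where "X\<in>C" "Y\<in>C" "(u,a)\<in>X" "(v,b)\<in>Y" by blast
        then obtain Z where "Z\<in>C" "(u,a)\<in>Z" "(v,b)\<in>Z" using ch by blast
        then show "(u + v, a + b) \<in> \<Union>C" using CA unfolding A_def hbgood_def by blast
      next
        fix c u a assume "(u, a) \<in> \<Union>C"
        then show "(c *\<^sub>R u, c * a) \<in> \<Union>C" using CA unfolding A_def hbgood_def by blast
      next
        fix a assume "(0, a) \<in> \<Union>C"
        then show "a = 0" using CA unfolding A_def hbgood_def by blast
      next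
        show "(z1, 1) \<in> \<Union>C" using False CA unfolding A_def hbgood_def by blast
      next
        fix u a assume "(u, a) \<in> \<Union>C"
        then show "a \<le> p u" using CA unfolding A_def hbgood_def by blast
      qed
      then show ?thesis unfolding A_def by blast
    qed
  qed
  then obtain M where MA: "M \<in> A" and mx: "\<And>X. X\<in>A \<Longrightarrow> M \<subseteq> X \<Longrightarrow> X = M" by blast
  have gM: "hbgood p z1 M" using MA A_def by simp
  have full: "\<And>y. y \<in> fst ` M"
  proof (rule ccontr)
    fix y assume "y \<notin> fst ` M"
    from hbgood_extend[OF gM sp this] obtain G where "hbgood p z1 G" "M \<subseteq> G" "G \<noteq> M" by blast
    then show False using mx A_def by blast
  qed
  define L where "L u = (THE a. (u,a)\<in>M)" for u
  have Lm: "(u, L u) \<in> M" for u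
  proof -
    obtain a where a: "(u,a)\<in>M" using full[of u] by force
    have "(THE a. (u,a)\<in>M) = a" using a hbgood_fun[OF gM] by (intro the_equality) auto
    then show ?thesis using a L_def by simp
  qed
  have Leq: "(u,a)\<in>M \<Longrightarrow> L u = a" for u a using hbgood_fun[OF gM Lm] by simp
  have "linear L"
  proof (rule linearI)
    fix b1 b2
    have "(b1 + b2, L b1 + L b2) \<in> M" using gM Lm unfolding hbgood_def by blast
    then show "L (b1 + b2) = L b1 + L b2" by (rule Leq)
  next
    fix r b have "(r *\<^sub>R b, r * L b) \<in> M" using gM Lm unfolding hbgood_def by blast
    then show "L (r *\<^sub>R b) = r *\<^sub>R L b" using Leq by simp
  qed
  moreover have "\<forall>z. L z \<le> p z" using gM Lm unfolding hbgood_def by blast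
  moreover have "L z1 = 1" using gM unfolding hbgood_def by (intro Leq) blast
  ultimately show ?thesis by blast
qed

lemma separation:
  fixes Q :: "'b::real_vector \<Rightarrow> real" and C :: "'b set"
  assumes Qadd: "\<And>x y. Q (x+y) \<le> Q x + Q y" and Qhom: "\<And>c x. Q (c *\<^sub>R x) = \<bar>c\<bar> * Q x"
    and cvx: "convex C" and d: "\<delta> > 0" and far: "\<And>c. c \<in> C \<Longrightarrow> \<delta> \<le> Q (c - p0)"
  shows "\<exists>L k \<theta>. linear L \<and> (\<forall>z. \<bar>L z\<bar> \<le> k * Q z) \<and> \<theta> > 0 \<and> (\<forall>c\<in>C. L c + \<theta> \<le> L p0)"
proof (cases "C = {}")
  case True
  then show ?thesis by (intro exI[of _ "\<lambda>z. 0"] exI[of _ 0] exI[of _ 1]) (auto simp: linear_zero)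
next
  case False
  then obtain c0 where c0: "c0 \<in> C" by blast
  have Q0: "Q 0 = 0" using Qhom[of 0 0] by simp
  have Qneg: "Q (- x) = Q x" for x using Qhom[of "-1" x] by simp
  have Qnn: "Q x \<ge> 0" for x using Qadd[of x "-x"] Q0 Qneg[of x] by simp
  define K where "K = {c - c0 + n | c n. c \<in> C \<and> Q n < \<delta>}"
  have inK: "c \<in> C \<Longrightarrow> Q n < \<delta> \<Longrightarrow> c - c0 + n \<in> K" for c n unfolding K_def by blast
  have K0: "0 \<in> K" using inK[OF c0, of 0] Q0 d by simp
  have Kc: "convex K"
  proof (rule convexI)
    fix x y :: 'b and u v :: real assume x: "x \<in> K" and y: "y \<in> K" and uv0: "0 \<le> u" "0 \<le> v" "u + v = 1"
    have uv: "0 \<le> u \<and> 0 \<le> v \<and> u + v = 1" using uv0 by simp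
    obtain c1 n1 where 1: "x = c1 - c0 + n1" "c1 \<in> C" "Q n1 < \<delta>" using x K_def by blast
    obtain c2 n2 where 2: "y = c2 - c0 + n2" "c2 \<in> C" "Q n2 < \<delta>" using y K_def by blast
    have "u *\<^sub>R c1 + v *\<^sub>R c2 \<in> C" using cvx 1 2 uv unfolding convex_def by blast
    moreover have "Q (u *\<^sub>R n1 + v *\<^sub>R n2) < \<delta>"
    proof -
      have "Q (u *\<^sub>R n1 + v *\<^sub>R n2) \<le> u * Q n1 + v * Q n2" using Qadd[of "u *\<^sub>R n1" "v *\<^sub>R n2"] Qhom uv by simp
      also have "\<dots> < \<delta>"
      proof (cases "u = 0")
        case True then show ?thesis using uv 2 by simp
      next
        case False
        then have "u * Q n1 < u * \<delta>" using uv 1 by simp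
        moreover have "v * Q n2 \<le> v * \<delta>" using uv 2 by (simp add: mult_left_mono)
        ultimately show ?thesis using uv by (simp add: algebra_simps) (metis add_less_le_mono distrib_left mult.commute mult.right_neutral)
      qed
      finally show ?thesis .
    qed
    moreover have "u *\<^sub>R x + v *\<^sub>R y = (u *\<^sub>R c1 + v *\<^sub>R c2) - c0 + (u *\<^sub>R n1 + v *\<^sub>R n2)"
    proof -
      have "u *\<^sub>R x + v *\<^sub>R y = (u *\<^sub>R c1 + v *\<^sub>R c2) - (u + v) *\<^sub>R c0 + (u *\<^sub>R n1 + v *\<^sub>R n2)"
        unfolding 1(1) 2(1) by (simp add: algebra_simps)
      then show ?thesis using uv by simp
    qed
    ultimately show "u *\<^sub>R x + v *\<^sub>R y \<in> K" using inK by simp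
  qed
  define S where "S z = {l. 0 < l \<and> (1/l) *\<^sub>R z \<in> K}" for z
  define \<mu> where "\<mu> z = Inf (S z)" for z
  have big: "l > 0 \<Longrightarrow> Q z / \<delta> < l \<Longrightarrow> l \<in> S z" for l z
  proof -
    assume l: "l > 0" "Q z / \<delta> < l"
    have "Q ((1/l) *\<^sub>R z) = Q z / l" using Qhom l by simp
    also have "\<dots> < \<delta>" using l d by (simp add: divide_less_eq mult.commute)
    finally have "c0 - c0 + (1/l) *\<^sub>R z \<in> K" by (rule inK[OF c0])
    then show "l \<in> S z" using l S_def by simp
  qed
  have Sne: "S z \<noteq> {}" for z
  proof -
    have "0 \<le> Q z / \<delta>" using Qnn[of z] d by simp
    then have "Q z / \<delta> + 1 \<in> S z" using big[of "Q z / \<delta> + 1" z] by simp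
    then show ?thesis by blast
  qed
  have Sbdd: "bdd_below (S z)" for z unfolding S_def bdd_below_def by (auto intro: exI[of _ 0])
  have mu_nn: "\<mu> z \<ge> 0" for z unfolding \<mu>_def by (rule cInf_greatest[OF Sne]) (auto simp: S_def)
  have mu_low: "l \<in> S z \<Longrightarrow> \<mu> z \<le> l" for l z unfolding \<mu>_def by (rule cInf_lower[OF _ Sbdd])
  have mu_Q: "\<mu> z \<le> Q z / \<delta>" for z
  proof (rule field_le_epsilon)
    fix e :: real assume "e > 0"
    moreover have "0 \<le> Q z / \<delta>" using Qnn[of z] d by simp
    ultimately have "Q z / \<delta> + e \<in> S z" using big[of "Q z / \<delta> + e" z] by simp
    then show "\<mu> z \<le> Q z / \<delta> + e" by (rule mu_low)
  qed
  have mu_lt: "\<mu> z < a \<Longrightarrow> \<exists>l\<in>S z. l < a" for z a unfolding \<mu>_def using cInf_lessD[OF Sne] by blast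
  have mu_add: "\<mu> (x + y) \<le> \<mu> x + \<mu> y" for x y
  proof (rule field_le_epsilon)
    fix e :: real assume e: "e > 0"
    obtain l1 where l1: "l1 \<in> S x" "l1 < \<mu> x + e/2" using mu_lt[of x "\<mu> x + e/2"] e by auto
    obtain l2 where l2: "l2 \<in> S y" "l2 < \<mu> y + e/2" using mu_lt[of y "\<mu> y + e/2"] e by auto
    have p: "l1 > 0" "l2 > 0" "(1/l1) *\<^sub>R x \<in> K" "(1/l2) *\<^sub>R y \<in> K" using l1 l2 S_def by auto
    have "(l1/(l1+l2)) *\<^sub>R ((1/l1) *\<^sub>R x) + (l2/(l1+l2)) *\<^sub>R ((1/l2) *\<^sub>R y) \<in> K"
      using p by (intro convexD[OF Kc]) (auto simp: add_divide_distrib[symmetric])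
    moreover have "(l1/(l1+l2)) *\<^sub>R ((1/l1) *\<^sub>R x) + (l2/(l1+l2)) *\<^sub>R ((1/l2) *\<^sub>R y) = (1/(l1+l2)) *\<^sub>R (x + y)"
      using p by (simp add: scaleR_add_right)
    ultimately have "l1 + l2 \<in> S (x+y)" using p S_def by simp
    then have "\<mu> (x+y) \<le> l1 + l2" by (rule mu_low)
    then show "\<mu> (x + y) \<le> \<mu> x + \<mu> y + e" using l1 l2 by simp
  qed
  have mu_le_hom: "\<mu> (c *\<^sub>R z) \<le> c * \<mu> z" if c: "c > 0" for c z
  proof -
    have "\<mu> (c *\<^sub>R z) / c \<le> \<mu> z" unfolding \<mu>_def[of z]
    proof (rule cInf_greatest[OF Sne])
      fix l assume "l \<in> S z"
      then have "c * l \<in> S (c *\<^sub>R z)" using c S_def by simp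
      then have "\<mu> (c *\<^sub>R z) \<le> c * l" by (rule mu_low)
      then show "\<mu> (c *\<^sub>R z) / c \<le> l" using c by (simp add: divide_le_eq mult.commute)
    qed
    then show ?thesis using c by (simp add: divide_le_eq mult.commute)
  qed
  have mu_hom: "\<mu> (c *\<^sub>R z) = c * \<mu> z" if c: "c \<ge> 0" for c z
  proof (cases "c = 0")
    case True
    have "\<mu> 0 \<le> e" if "e > 0" for e using mu_low[of e 0] that K0 S_def by simp
    then have "\<mu> 0 \<le> 0" by (meson field_le_epsilon add_0 less_add_same_cancel1)
    then show ?thesis using True mu_nn[of 0] by simp
  next
    case False
    then have cp: "c > 0" using c by simp
    have "\<mu> z = \<mu> ((1/c) *\<^sub>R (c *\<^sub>R z))" using cp by simp
    also have "\<dots> \<le> (1/c) * \<mu> (c *\<^sub>R z)" using mu_le_hom[of "1/c" "c *\<^sub>R z"] cp by simp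
    finally have "c * \<mu> z \<le> \<mu> (c *\<^sub>R z)" using cp by (simp add: field_simps)
    then show ?thesis using mu_le_hom[OF cp, of z] by linarith
  qed
  have sl: "sublin \<mu>" unfolding sublin_def using mu_add mu_hom by blast
  define z1 where "z1 = p0 - c0"
  have z1K: "z1 \<notin> K"
  proof
    assume "z1 \<in> K"
    then obtain c n where "z1 = c - c0 + n" "c \<in> C" "Q n < \<delta>" using K_def by blast
    then have "c - p0 = - n" "c \<in> C" "Q n < \<delta>" unfolding z1_def by (auto simp: algebra_simps)
    then show False using far Qneg by force
  qed
  have z1nz: "z1 \<noteq> 0" using z1K K0 by auto
  have mu1: "\<mu> z1 \<ge> 1"
  proof (rule ccontr)
    assume "\<not> 1 \<le> \<mu> z1"
    then obtain l where l: "l \<in> S z1" "l < 1" using mu_lt by force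
    then have lp: "l > 0" "(1/l) *\<^sub>R z1 \<in> K" using S_def by auto
    have "l *\<^sub>R ((1/l) *\<^sub>R z1) + (1 - l) *\<^sub>R 0 \<in> K" using lp l K0 by (intro convexD[OF Kc]) auto
    then have "z1 \<in> K" using lp by simp
    then show False using z1K by simp
  qed
  have "\<exists>L. linear L \<and> (\<forall>z. L z \<le> \<mu> z) \<and> L z1 = 1"
  proof (rule hahn_banach[OF sl z1nz])
    fix t :: real show "t \<le> \<mu> (t *\<^sub>R z1)"
    proof (cases "t \<ge> 0")
      case True then show ?thesis using mu_hom[OF True] mu1 by (simp add: mult_le_cancel_left1)
    next
      case False then show ?thesis using mu_nn[of "t *\<^sub>R z1"] by simp
    qed
  qed
  then obtain L where L: "linear L" "\<And>z. L z \<le> \<mu> z" "L z1 = 1" by blast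
  have bnd: "\<bar>L z\<bar> \<le> (1/\<delta>) * Q z" for z
  proof -
    have "L z \<le> Q z / \<delta>" using L(2) mu_Q order_trans by blast
    moreover have "L (- z) \<le> Q (-z) / \<delta>" using L(2) mu_Q order_trans by blast
    moreover have "L (-z) = - L z" using L(1) linear_neg by blast
    ultimately show ?thesis using Qneg by (simp add: abs_le_iff)
  qed
  define \<tau> where "\<tau> = \<delta> / (Q z1 + 1)"
  have tau: "\<tau> > 0" using d Qnn[of z1] \<tau>_def by simp
  have Qtau: "Q (\<tau> *\<^sub>R z1) < \<delta>"
  proof -
    have "Q (\<tau> *\<^sub>R z1) = \<delta> * Q z1 / (Q z1 + 1)" using Qhom tau \<tau>_def d Qnn[of z1] by simp
    also have "\<dots> < \<delta>" using d Qnn[of z1] by (simp add: divide_less_eq)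
    finally show ?thesis .
  qed
  have "L c + \<tau> \<le> L p0" if c: "c \<in> C" for c
  proof -
    have "c - c0 + \<tau> *\<^sub>R z1 \<in> K" using inK[OF c Qtau] .
    then have "\<mu> (c - c0 + \<tau> *\<^sub>R z1) \<le> 1" using mu_low S_def by simp
    then have "L (c - c0 + \<tau> *\<^sub>R z1) \<le> 1" using L(2) order_trans by blast
    moreover have "L (c - c0 + \<tau> *\<^sub>R z1) = L c - L c0 + \<tau>" using L(1) L(3)
      by (simp add: linear_add linear_diff linear_scale)
    moreover have "L p0 - L c0 = 1" using L(1) L(3) z1_def by (simp add: linear_diff)
    ultimately show ?thesis by simp
  qed
  then show ?thesis using L(1) bnd tau by blast
qed

lemma sn_add: "seminorm p \<Longrightarrow> p (x + y) \<le> p x + p y" unfolding seminorm_def by blast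
lemma sn_hom: "seminorm p \<Longrightarrow> p (c *\<^sub>R x) = \<bar>c\<bar> * p x" unfolding seminorm_def by blast
lemma sn_0: "seminorm p \<Longrightarrow> p 0 = 0" using sn_hom[of p 0 0] by simp
lemma sn_neg: "seminorm p \<Longrightarrow> p (- x) = p x" using sn_hom[of p "-1" x] by simp
lemma sn_nn: "seminorm p \<Longrightarrow> p x \<ge> 0" using sn_add[of p x "-x"] sn_0[of p] sn_neg[of p x] by simp
lemma sn_diff: "seminorm p \<Longrightarrow> p (x - y) \<le> p x + p y" using sn_add[of p x "-y"] sn_neg[of p y] by simp

lemma sum_sn_nn: "\<forall>p\<in>F. seminorm p \<Longrightarrow> 0 \<le> (\<Sum>p\<in>F. p v)" by (simp add: sum_nonneg sn_nn)
lemma sum_sn_ge: "\<forall>p\<in>F. seminorm p \<Longrightarrow> finite F \<Longrightarrow> q \<in> F \<Longrightarrow> q v \<le> (\<Sum>p\<in>F. p v)"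
  by (rule member_le_sum) (auto simp: sn_nn)
lemma sum_sn_add: "\<forall>p\<in>F. seminorm p \<Longrightarrow> (\<Sum>p\<in>F. p (x + y)) \<le> (\<Sum>p\<in>F. p x) + (\<Sum>p\<in>F. p y)"
  by (simp add: sum.distrib[symmetric] sum_mono sn_add)
lemma sum_sn_hom: "\<forall>p\<in>F. seminorm p \<Longrightarrow> (\<Sum>p\<in>F. p (c *\<^sub>R x)) = \<bar>c\<bar> * (\<Sum>p\<in>F. p x)"
  by (simp add: sum_distrib_left sn_hom)

lemma dual_bound:
  assumes lcs: "lcs P" and phi: "\<phi> \<in> lc_dual P"
  shows "linear \<phi> \<and> (\<exists>F k. finite F \<and> F \<subseteq> P \<and> (\<forall>v. \<bar>\<phi> v\<bar> \<le> k * (\<Sum>p\<in>F. p v)))"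
proof -
  have lin: "linear \<phi>" and op: "lc_open P {y. \<bar>\<phi> y\<bar> < 1}" using phi unfolding lc_dual_def by auto
  have "0 \<in> {y. \<bar>\<phi> y\<bar> < 1}" using linear_0[OF lin] by simp
  with op[unfolded lc_open_def] have "\<exists>F e. finite F \<and> F \<subseteq> P \<and> e > 0 \<and> lc_nbhd F e 0 \<subseteq> {y. \<bar>\<phi> y\<bar> < 1}"
    by (rule bspec)
  then obtain F e where F: "finite F" "F \<subseteq> P" "e > 0" "lc_nbhd F e 0 \<subseteq> {y. \<bar>\<phi> y\<bar> < 1}"
    by blast
  have sn: "\<forall>p\<in>F. seminorm p" using F(2) lcs unfolding lcs_def by blast
  have "\<bar>\<phi> v\<bar> \<le> (1/e) * (\<Sum>p\<in>F. p v)" for v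
  proof (rule field_le_epsilon)
    fix \<tau> :: real assume tau: "\<tau> > 0"
    define S where "S = (\<Sum>p\<in>F. p v)"
    have S0: "S \<ge> 0" using sum_sn_nn[OF sn] S_def by simp
    have Sp: "S + e * \<tau> > 0" using tau F(3) S0 by (simp add: add_nonneg_pos)
    define t where "t = e / (S + e * \<tau>)"
    have tp: "t > 0" using Sp F(3) t_def by simp
    have "t *\<^sub>R v \<in> lc_nbhd F e 0" unfolding lc_nbhd_def
    proof (intro CollectI ballI)
      fix p assume p: "p \<in> F"
      have "p (t *\<^sub>R v - 0) = t * p v" using sn_hom[of p t v] sn p tp by simp
      also have "\<dots> \<le> t * S" using sum_sn_ge[OF sn F(1) p] tp S_def by simp
      also have "\<dots> < e"
      proof -
        have "t * S = e * (S / (S + e * \<tau>))" unfolding t_def by simp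
        also have "S / (S + e * \<tau>) < 1" using tau F(3) Sp by (simp add: divide_less_eq)
        then have "e * (S / (S + e * \<tau>)) < e * 1" using F(3) by (intro mult_strict_left_mono) auto
        finally show ?thesis by simp
      qed
      finally show "p (t *\<^sub>R v - 0) < e" .
    qed
    then have "\<bar>\<phi> (t *\<^sub>R v)\<bar> < 1" using F(4) by blast
    moreover have "\<phi> (t *\<^sub>R v) = t * \<phi> v" using linear_scale[OF lin] by simp
    ultimately have "t * \<bar>\<phi> v\<bar> < 1" using tp by (simp add: abs_mult)
    then have "\<bar>\<phi> v\<bar> < 1 / t" using tp by (simp add: mult.commute less_divide_eq)
    also have "1 / t = (1/e) * S + \<tau>" using F(3) Sp unfolding t_def by (simp add: add_divide_distrib)
    finally show "\<bar>\<phi> v\<bar> \<le> (1/e) * (\<Sum>p\<in>F. p v) + \<tau>" using S_def by simp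
  qed
  then have "\<forall>v. \<bar>\<phi> v\<bar> \<le> (1/e) * (\<Sum>p\<in>F. p v)" by blast
  with lin F(1,2) show ?thesis by blast
qed

lemma dual_intro:
  assumes lcs: "lcs P" and lin: "linear \<phi>" and F: "finite F" "F \<subseteq> P"
    and bnd: "\<And>v. \<bar>\<phi> v\<bar> \<le> k * (\<Sum>p\<in>F. p v)"
  shows "\<phi> \<in> lc_dual P"
proof -
  have sn: "\<forall>p\<in>F. seminorm p" using F(2) lcs unfolding lcs_def by blast
  have "lc_open P {y. \<bar>\<phi> y\<bar> < 1}" unfolding lc_open_def
  proof (intro ballI)
    fix y0 assume "y0 \<in> {y. \<bar>\<phi> y\<bar> < 1}"
    then have y0: "\<bar>\<phi> y0\<bar> < 1" by simp
    define k' where "k' = \<bar>k\<bar> + 1"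
    define e where "e = (1 - \<bar>\<phi> y0\<bar>) / (k' * (real (card F) + 1))"
    have kp: "k' > 0" using k'_def by simp
    have ep: "e > 0" using y0 kp e_def by simp
    have "lc_nbhd F e y0 \<subseteq> {y. \<bar>\<phi> y\<bar> < 1}"
    proof
      fix y assume "y \<in> lc_nbhd F e y0"
      then have yn: "\<And>p. p \<in> F \<Longrightarrow> p (y - y0) < e" unfolding lc_nbhd_def by blast
      have "(\<Sum>p\<in>F. p (y - y0)) \<le> real (card F) * e" using sum_bounded_above[of F "\<lambda>p. p (y - y0)" e] yn
        by (simp add: less_imp_le)
      have "\<bar>\<phi> y - \<phi> y0\<bar> = \<bar>\<phi> (y - y0)\<bar>" using lin by (simp add: linear_diff)
      also have "\<dots> \<le> k * (\<Sum>p\<in>F. p (y - y0))" by (rule bnd)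
      also have "\<dots> \<le> k' * (\<Sum>p\<in>F. p (y - y0))"
        using sum_sn_nn[OF sn, of "y - y0"] k'_def by (intro mult_right_mono) auto
      also have "\<dots> \<le> k' * (real (card F) * e)"
        using \<open>(\<Sum>p\<in>F. p (y - y0)) \<le> real (card F) * e\<close> kp by simp
      also have "\<dots> < k' * ((real (card F) + 1) * e)" using kp ep by simp
      also have "\<dots> = 1 - \<bar>\<phi> y0\<bar>" unfolding e_def using kp by simp
      finally show "y \<in> {y. \<bar>\<phi> y\<bar> < 1}" by simp
    qed
    then show "\<exists>F' e. finite F' \<and> F' \<subseteq> P \<and> e > 0 \<and> lc_nbhd F' e y0 \<subseteq> {y. \<bar>\<phi> y\<bar> < 1}"
      using F ep by blast
  qed
  then show ?thesis using lin unfolding lc_dual_def by blast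
qed

lemma cvx_ereal:
  assumes cv: "convex_fun g" and 1: "g y1 \<le> ereal m1" and 2: "g y2 \<le> ereal m2"
    and u: "0 \<le> u" "u \<le> 1"
  shows "g (u *\<^sub>R y1 + (1 - u) *\<^sub>R y2) \<le> ereal (u * m1 + (1 - u) * m2)"
proof -
  have "g (u *\<^sub>R y1 + (1 - u) *\<^sub>R y2) \<le> ereal u * g y1 + ereal (1 - u) * g y2"
    using cv u unfolding convex_fun_def by blast
  also have "\<dots> \<le> ereal u * ereal m1 + ereal (1 - u) * ereal m2"
  proof (rule add_mono)
    show "ereal u * g y1 \<le> ereal u * ereal m1" using ereal_mult_left_mono[OF 1, of "ereal u"] u by simp
    show "ereal (1 - u) * g y2 \<le> ereal (1 - u) * ereal m2" using ereal_mult_left_mono[OF 2, of "ereal (1-u)"] u by simp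
  qed
  finally show ?thesis by simp
qed

lemma ereal_lt_le: "a < b \<Longrightarrow> ereal b \<le> c \<Longrightarrow> ereal a < c"
  using less_le_trans[of "ereal a" "ereal b" c] by simp
lemma ereal_lt_le2: "ereal a < c \<Longrightarrow> c \<le> ereal b \<Longrightarrow> a < b"
  using less_le_trans[of "ereal a" c "ereal b"] by simp

lemma hb_sub:
  fixes g :: "'a::real_vector \<Rightarrow> ereal"
  assumes lcs: "lcs P" and pr: "proper_fun g" and cv: "convex_fun g" and ls: "lc_lsc P g"
    and gx: "g x = ereal gx" and e: "\<epsilon> > 0" and et: "\<eta> > 0"
    and ray: "\<And>s. s > 0 \<Longrightarrow> ereal (gx + r * s) \<le> g (x + s *\<^sub>R w)"
  shows "\<exists>a\<in>lc_dual P. r - \<eta> \<le> a w \<and> (\<forall>y. g x + ereal (a (y - x)) - ereal \<epsilon> \<le> g y)"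
proof -
  have lscD: "\<exists>F d. finite F \<and> F \<subseteq> P \<and> d > 0 \<and> (\<forall>y. (\<forall>p\<in>F. p (y - y0) < d) \<longrightarrow> ereal c < g y)"
    if "ereal c < g y0" for c y0
  proof -
    have "lc_open P {y. ereal c < g y}" using ls unfolding lc_lsc_def by blast
    then have "\<exists>F d. finite F \<and> F \<subseteq> P \<and> d > 0 \<and> lc_nbhd F d y0 \<subseteq> {y. ereal c < g y}"
      using that unfolding lc_open_def by (intro bspec[of _ _ y0]) auto
    then obtain F d where "finite F" "F \<subseteq> P" "d > 0" "lc_nbhd F d y0 \<subseteq> {y. ereal c < g y}"
      by blast
    then show ?thesis unfolding lc_nbhd_def by blast
  qed
  have snP: "\<And>p. p \<in> P \<Longrightarrow> seminorm p" using lcs unfolding lcs_def by blast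
  have "ereal (gx - \<epsilon>/2) < g x" using gx e by simp
  from lscD[OF this] obtain F1 e1 where
    F1a: "finite F1 \<and> F1 \<subseteq> P \<and> e1 > 0 \<and> (\<forall>y. (\<forall>p\<in>F1. p (y - x) < e1) \<longrightarrow> ereal (gx - \<epsilon>/2) < g y)"
    by (elim exE)
  then have F1: "finite F1" "F1 \<subseteq> P" "e1 > 0"
    and n1: "\<And>y. (\<forall>p\<in>F1. p (y - x) < e1) \<Longrightarrow> ereal (gx - \<epsilon>/2) < g y" by auto
  have sn1: "\<forall>p\<in>F1. seminorm p" using F1(2) snP by blast
  define W where "W = (\<Sum>p\<in>F1. p w)"
  have W0: "W \<ge> 0" using sum_sn_nn[OF sn1] W_def by simp
  define \<sigma> where "\<sigma> = min (e1 / (2 * (W + 1))) (\<epsilon> / (4 * (\<bar>r - \<eta>\<bar> + 1)))"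
  have sp: "\<sigma> > 0"
  proof -
    have "e1 / (2 * (W + 1)) > 0" using F1(3) W0 by (intro divide_pos_pos) auto
    moreover have "4 * (\<bar>r - \<eta>\<bar> + 1) > 0" by (smt (verit) abs_ge_zero)
    then have "\<epsilon> / (4 * (\<bar>r - \<eta>\<bar> + 1)) > 0" using e by (intro divide_pos_pos) auto
    ultimately show ?thesis unfolding \<sigma>_def by simp
  qed
  have sW: "\<sigma> * W < e1 / 2"
  proof -
    have "\<sigma> * W \<le> e1 / (2 * (W + 1)) * W" using W0 \<sigma>_def by (intro mult_right_mono) auto
    also have "\<dots> = (e1/2) * (W / (W + 1))" using W0 by simp
    also have "\<dots> < (e1/2) * 1" using W0 F1(3) by (intro mult_strict_left_mono) auto
    finally show ?thesis by simp
  qed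
  have sR: "\<sigma> * \<bar>r - \<eta>\<bar> < \<epsilon> / 4"
  proof -
    have "\<sigma> * \<bar>r - \<eta>\<bar> \<le> \<epsilon> / (4 * (\<bar>r - \<eta>\<bar> + 1)) * \<bar>r - \<eta>\<bar>" using \<sigma>_def by (intro mult_right_mono) auto
    also have "\<dots> = (\<epsilon>/4) * (\<bar>r - \<eta>\<bar> / (\<bar>r - \<eta>\<bar> + 1))" by simp
    also have "\<dots> < (\<epsilon>/4) * 1" using e by (intro mult_strict_left_mono) auto
    finally show ?thesis by simp
  qed
  have "ereal (gx + r * \<sigma>) \<le> g (x + \<sigma> *\<^sub>R w)" using ray sp by blast
  moreover have "gx + r * \<sigma> - \<eta> * \<sigma> / 2 < gx + r * \<sigma>" using et sp by simp
  ultimately have "ereal (gx + r * \<sigma> - \<eta> * \<sigma> / 2) < g (x + \<sigma> *\<^sub>R w)"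
    by (intro ereal_lt_le)
  from lscD[OF this] obtain F2 e2 where
    F2a: "finite F2 \<and> F2 \<subseteq> P \<and> e2 > 0 \<and> (\<forall>y. (\<forall>p\<in>F2. p (y - (x + \<sigma> *\<^sub>R w)) < e2) \<longrightarrow> ereal (gx + r * \<sigma> - \<eta> * \<sigma> / 2) < g y)"
    by (elim exE)
  then have F2: "finite F2" "F2 \<subseteq> P" "e2 > 0"
    and n2: "\<And>y. (\<forall>p\<in>F2. p (y - (x + \<sigma> *\<^sub>R w)) < e2) \<Longrightarrow> ereal (gx + r * \<sigma> - \<eta> * \<sigma> / 2) < g y" by auto
  define F where "F = F1 \<union> F2"
  have F: "finite F" "F \<subseteq> P" using F1 F2 F_def by auto
  have sn: "\<forall>p\<in>F. seminorm p" using F(2) snP by blast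
  define \<delta> where "\<delta> = min (min (e1/2) e2) (\<epsilon>/4)"
  have dp: "\<delta> > 0" using F1 F2 e \<delta>_def by simp
  define Q :: "'a \<times> real \<Rightarrow> real" where "Q z = (\<Sum>p\<in>F. p (fst z)) + \<bar>snd z\<bar>" for z
  define E where "E = {(y - s *\<^sub>R w, m - s * (r - \<eta>)) | y m s. g y \<le> ereal m \<and> s \<ge> 0}"
  define p0 where "p0 = (x, gx - \<epsilon>)"
  have far: "\<delta> \<le> Q (c - p0)" if c: "c \<in> E" for c
  proof (rule ccontr)
    assume "\<not> \<delta> \<le> Q (c - p0)"
    then have lt: "Q (c - p0) < \<delta>" by simp
    obtain y m s where ym: "c = (y - s *\<^sub>R w, m - s * (r - \<eta>))" "g y \<le> ereal m" "s \<ge> 0"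
      using c E_def by blast
    define v where "v = y - s *\<^sub>R w - x"
    have Qc: "Q (c - p0) = (\<Sum>p\<in>F. p v) + \<bar>m - s * (r - \<eta>) - (gx - \<epsilon>)\<bar>"
      unfolding Q_def ym(1) p0_def v_def by simp
    have hv: "p v < \<delta>" if "p \<in> F" for p
    proof -
      have "p v \<le> (\<Sum>p\<in>F. p v)" using sum_sn_ge[OF sn F(1) that] .
      also have "\<dots> \<le> Q (c - p0)" using Qc by simp
      finally show ?thesis using lt by simp
    qed
    have "\<bar>m - s * (r - \<eta>) - (gx - \<epsilon>)\<bar> \<le> Q (c - p0)" using Qc sum_sn_nn[OF sn] by simp
    then have hm: "m < gx - \<epsilon> + \<delta> + s * (r - \<eta>)" using lt by simp
    show False
    proof (cases "s \<le> \<sigma>")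
      case True
      have "p (y - x) < e1" if p: "p \<in> F1" for p
      proof -
        have spn: "seminorm p" using p sn1 by blast
        have "y - x = v + s *\<^sub>R w" unfolding v_def by simp
        then have "p (y - x) \<le> p v + p (s *\<^sub>R w)" using sn_add[OF spn] by simp
        also have "p (s *\<^sub>R w) = s * p w" using sn_hom[OF spn] ym(3) by simp
        also have "s * p w \<le> \<sigma> * W"
          using sum_sn_ge[OF sn1 F1(1) p, of w] W_def True ym(3) sn_nn[OF spn, of w] W0
          by (intro mult_mono) auto
        finally have "p (y - x) \<le> p v + \<sigma> * W" by simp
        moreover have "p v < e1/2" using hv[of p] p F_def \<delta>_def by simp
        ultimately show ?thesis using sW by simp
      qed
      then have "ereal (gx - \<epsilon>/2) < g y" using n1 by blast
      then have "gx - \<epsilon>/2 < m" using ym(2) by (rule ereal_lt_le2)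
      moreover have "s * (r - \<eta>) < \<epsilon> / 4"
      proof -
        have "s * (r - \<eta>) \<le> s * \<bar>r - \<eta>\<bar>" using ym(3) by (intro mult_left_mono) auto
        also have "\<dots> \<le> \<sigma> * \<bar>r - \<eta>\<bar>" using True by (intro mult_right_mono) auto
        finally show ?thesis using sR by simp
      qed
      moreover have "\<delta> \<le> \<epsilon> / 4" using \<delta>_def by simp
      ultimately show False using hm by simp
    next
      case False
      then have s_pos: "s > 0" using sp by simp
      define u where "u = \<sigma> / s"
      have u: "0 < u" "u \<le> 1" "u * s = \<sigma>" using False sp s_pos u_def by auto
      define z where "z = u *\<^sub>R y + (1 - u) *\<^sub>R x"
      have zd: "z - (x + \<sigma> *\<^sub>R w) = u *\<^sub>R v"
      proof -
        have "z - (x + \<sigma> *\<^sub>R w) = u *\<^sub>R y - u *\<^sub>R x - (u * s) *\<^sub>R w"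
          unfolding z_def u(3) by (simp add: algebra_simps)
        also have "\<dots> = u *\<^sub>R v" unfolding v_def by (simp add: algebra_simps)
        finally show ?thesis .
      qed
      have "p (z - (x + \<sigma> *\<^sub>R w)) < e2" if p: "p \<in> F2" for p
      proof -
        have spn: "seminorm p" using p sn F_def by blast
        have "p (z - (x + \<sigma> *\<^sub>R w)) = u * p v" unfolding zd using sn_hom[OF spn] u by simp
        also have "\<dots> \<le> p v" using mult_right_mono[OF u(2) sn_nn[OF spn, of v]] by simp
        also have "\<dots> < \<delta>" using hv p F_def by blast
        finally show ?thesis using \<delta>_def by simp
      qed
      then have "ereal (gx + r * \<sigma> - \<eta> * \<sigma> / 2) < g z" using n2 by blast
      moreover have "g z \<le> ereal (u * m + (1 - u) * gx)" unfolding z_def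
        using cvx_ereal[OF cv ym(2), of x gx u] gx u by simp
      ultimately have "gx + r * \<sigma> - \<eta> * \<sigma> / 2 < u * m + (1 - u) * gx"
        by (rule ereal_lt_le2)
      moreover have "u * m < u * (gx - \<epsilon> + \<delta> + s * (r - \<eta>))" using hm u by simp
      moreover have "u * (gx - \<epsilon> + \<delta> + s * (r - \<eta>)) = u * gx + u * (\<delta> - \<epsilon>) + \<sigma> * (r - \<eta>)"
        using u(3) by (simp add: algebra_simps)
      moreover have "u * (\<delta> - \<epsilon>) < 0" using u \<delta>_def e by (simp add: mult_pos_neg)
      ultimately have "\<eta> * \<sigma> / 2 < 0" by (simp add: algebra_simps)
      then show False using mult_pos_pos[OF et sp] by simp
    qed
  qed
  have cvE: "convex E"
  proof (rule convexI)
    fix c1 c2 :: "'a \<times> real" and u v :: real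
    assume c: "c1 \<in> E" "c2 \<in> E" and uv: "0 \<le> u" "0 \<le> v" "u + v = 1"
    obtain y1 m1 s1 where 1: "c1 = (y1 - s1 *\<^sub>R w, m1 - s1 * (r - \<eta>))" "g y1 \<le> ereal m1" "s1 \<ge> 0"
      using c E_def by blast
    obtain y2 m2 s2 where 2: "c2 = (y2 - s2 *\<^sub>R w, m2 - s2 * (r - \<eta>))" "g y2 \<le> ereal m2" "s2 \<ge> 0"
      using c E_def by blast
    have v: "v = 1 - u" using uv by simp
    have "g (u *\<^sub>R y1 + v *\<^sub>R y2) \<le> ereal (u * m1 + v * m2)"
      using cvx_ereal[OF cv 1(2) 2(2), of u] uv v by simp
    moreover have "u * s1 + v * s2 \<ge> 0" using uv 1 2 by simp
    moreover have "u *\<^sub>R c1 + v *\<^sub>R c2 = ((u *\<^sub>R y1 + v *\<^sub>R y2) - (u * s1 + v * s2) *\<^sub>R w,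
        (u * m1 + v * m2) - (u * s1 + v * s2) * (r - \<eta>))"
      unfolding 1(1) 2(1) by (simp add: algebra_simps)
    ultimately show "u *\<^sub>R c1 + v *\<^sub>R c2 \<in> E" unfolding E_def by blast
  qed
  have Qadd: "Q (a + b) \<le> Q a + Q b" for a b
    using sum_sn_add[OF sn, of "fst a" "fst b"] abs_triangle_ineq[of "snd a" "snd b"] unfolding Q_def by simp
  have Qhom: "Q (c *\<^sub>R a) = \<bar>c\<bar> * Q a" for c a
    using sum_sn_hom[OF sn, of c "fst a"] unfolding Q_def by (simp add: abs_mult distrib_left)
  obtain L k \<theta> where L: "linear L" "\<And>z. \<bar>L z\<bar> \<le> k * Q z" "\<theta> > 0" "\<And>c. c \<in> E \<Longrightarrow> L c + \<theta> \<le> L p0"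
    using separation[OF Qadd Qhom cvE dp far] by blast
  define lam where "lam = L (0, 1)"
  have Ldec: "L (v, \<nu>) = L (v, 0) + \<nu> * lam" for v \<nu>
  proof -
    have "(v, \<nu>) = (v, 0) + \<nu> *\<^sub>R (0, 1)" by simp
    then have "L (v, \<nu>) = L (v, 0) + L (\<nu> *\<^sub>R (0, 1))" using linear_add[OF L(1)] by metis
    also have "L (\<nu> *\<^sub>R (0, 1)) = \<nu> * lam" unfolding lam_def using linear_scale[OF L(1), of \<nu> "(0,1)"] by simp
    finally show ?thesis .
  qed
  have inE: "(y - s *\<^sub>R w, m - s * (r - \<eta>)) \<in> E" if "g y \<le> ereal m" "s \<ge> 0" for y m s
    unfolding E_def using that by blast
  have "L (x, gx) + \<theta> \<le> L p0" using L(4)[OF inE[of x gx 0]] gx by simp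
  then have "\<epsilon> * lam \<le> - \<theta>" unfolding p0_def using Ldec[of x gx] Ldec[of x "gx - \<epsilon>"] by (simp add: algebra_simps)
  then have lneg: "lam < 0" using e L(3) by (smt (verit) mult_nonneg_nonneg)
  define \<kappa> where "\<kappa> = - lam"
  have kp: "\<kappa> > 0" using lneg \<kappa>_def by simp
  define a where "a v = L (v, 0) / \<kappa>" for v
  have lina: "linear a"
  proof (rule linearI)
    fix b1 b2 show "a (b1 + b2) = a b1 + a b2" unfolding a_def
      using linear_add[OF L(1), of "(b1,0)" "(b2,0)"] by (simp add: add_divide_distrib)
  next
    fix c b show "a (c *\<^sub>R b) = c *\<^sub>R a b" unfolding a_def
      using linear_scale[OF L(1), of c "(b,0)"] by simp
  qed
  have "\<bar>a v\<bar> \<le> (k / \<kappa>) * (\<Sum>p\<in>F. p v)" for v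
  proof -
    have "\<bar>L (v,0)\<bar> \<le> k * (\<Sum>p\<in>F. p v)" using L(2)[of "(v,0)"] unfolding Q_def by simp
    then show ?thesis unfolding a_def using kp by (simp add: abs_div divide_right_mono)
  qed
  then have adual: "a \<in> lc_dual P" using dual_intro[OF lcs lina F] by blast
  have subg: "g x + ereal (a (y - x)) - ereal \<epsilon> \<le> g y" for y
  proof (cases "g y = \<infinity>")
    case True then show ?thesis by simp
  next
    case False
    then obtain m where m: "g y = ereal m" using pr unfolding proper_fun_def by (cases "g y") auto
    have "L (y, m) + \<theta> \<le> L p0" using L(4)[OF inE[of y m 0]] m by simp
    then have "L (y, 0) - L (x, 0) \<le> \<kappa> * (m - gx + \<epsilon>) - \<theta>"
      unfolding p0_def using Ldec[of y m] Ldec[of x "gx - \<epsilon>"] \<kappa>_def by (simp add: algebra_simps)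
    moreover have "L (y, 0) - L (x, 0) = \<kappa> * a (y - x)"
      unfolding a_def using kp linear_diff[OF L(1), of "(y,0)" "(x,0)"] by simp
    ultimately have "\<kappa> * a (y - x) \<le> \<kappa> * (m - gx + \<epsilon>)" using L(3) by simp
    then have "a (y - x) \<le> m - gx + \<epsilon>" using kp by simp
    then show ?thesis using gx m by simp
  qed
  have slope: "r - \<eta> \<le> a w"
  proof (rule ccontr)
    assume "\<not> r - \<eta> \<le> a w"
    then have "L (w, 0) / \<kappa> < r - \<eta>" unfolding a_def by simp
    then have "L (w, 0) < \<kappa> * (r - \<eta>)" using kp by (simp add: divide_less_eq mult.commute)
    define d where "d = \<kappa> * (r - \<eta>) - L (w, 0)"
    have dp': "d > 0" using \<open>L (w, 0) < \<kappa> * (r - \<eta>)\<close> d_def by simp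
    define s where "s = \<epsilon> * \<kappa> / d"
    have s0: "s \<ge> 0" using e kp dp' s_def by simp
    have "L (x - s *\<^sub>R w, gx - s * (r - \<eta>)) + \<theta> \<le> L p0" using L(4)[OF inE[of x gx s]] gx s0 by simp
    moreover have "L (x - s *\<^sub>R w, 0) = L (x, 0) - s * L (w, 0)"
      using linear_diff[OF L(1), of "(x,0)" "(s *\<^sub>R w, 0)"] linear_scale[OF L(1), of s "(w,0)"] by simp
    ultimately have "- s * L (w, 0) + s * (r - \<eta>) * \<kappa> + \<theta> \<le> \<epsilon> * \<kappa>"
      unfolding p0_def using Ldec[of "x - s *\<^sub>R w" "gx - s * (r - \<eta>)"] Ldec[of x "gx - \<epsilon>"] \<kappa>_def
      by (simp add: algebra_simps)
    moreover have "- s * L (w, 0) + s * (r - \<eta>) * \<kappa> = s * d" unfolding d_def by (simp add: algebra_simps)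
    moreover have "s * d = \<epsilon> * \<kappa>" unfolding s_def using dp' by simp
    ultimately show False using L(3) by simp
  qed
  show ?thesis using adual slope subg by blast
qed

instantiation "fun" :: (type, real_vector) real_vector
begin
definition scaleR_fun :: "real \<Rightarrow> ('a \<Rightarrow> 'b) \<Rightarrow> 'a \<Rightarrow> 'b" where
  "scaleR_fun c f = (\<lambda>x. c *\<^sub>R f x)"
instance by standard (simp_all add: scaleR_fun_def fun_eq_iff scaleR_add_right scaleR_add_left)
end

lemma scaleR_fun_apply [simp]: "(c *\<^sub>R f) x = c *\<^sub>R f x" by (simp add: scaleR_fun_def)

lemma sum_fun_apply: "(sum f A) x = (\<Sum>a\<in>A. f a x)"
  by (induct A rule: infinite_finite_induct) auto

lemma wstar_sep:
  fixes C :: "('a::real_vector \<Rightarrow> real) set"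
  assumes xs: "xs \<in> lc_dual P" and Cc: "fconvex C" "wstar_closed P C" and notin: "xs \<notin> C"
  shows "\<exists>w \<theta>. \<theta> > 0 \<and> (\<forall>\<psi>\<in>C. \<psi> w + \<theta> \<le> xs w)"
proof -
  have CD: "C \<subseteq> lc_dual P" using Cc(2) unfolding wstar_closed_def by blast
  have "\<not> (\<forall>(F::'a set) e. finite F \<and> e > 0 \<longrightarrow> (\<exists>\<psi>\<in>C. \<forall>z\<in>F. \<bar>xs z - \<psi> z\<bar> < e))"
    using Cc(2) xs notin unfolding wstar_closed_def by blast
  then obtain F e where F: "finite F" "e > 0" and far0: "\<And>\<psi>. \<psi> \<in> C \<Longrightarrow> \<exists>z\<in>F. e \<le> \<bar>xs z - \<psi> z\<bar>"
    by (auto simp: not_less)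
  define Q :: "('a \<Rightarrow> real) \<Rightarrow> real" where "Q \<psi> = (\<Sum>z\<in>F. \<bar>\<psi> z\<bar>)" for \<psi>
  have Qadd: "Q (a + b) \<le> Q a + Q b" for a b
    unfolding Q_def by (simp add: sum.distrib[symmetric] sum_mono abs_triangle_ineq)
  have Qhom: "Q (c *\<^sub>R a) = \<bar>c\<bar> * Q a" for c a
    unfolding Q_def by (simp add: sum_distrib_left abs_mult)
  have cvx: "convex C"
  proof (rule convexI)
    fix a b :: "'a \<Rightarrow> real" and u v :: real
    assume ab: "a \<in> C" "b \<in> C" and uv: "0 \<le> u" "0 \<le> v" "u + v = 1"
    have "(\<lambda>z. u * a z + (1 - u) * b z) \<in> C" using Cc(1) ab uv unfolding fconvex_def by auto
    moreover have "u *\<^sub>R a + v *\<^sub>R b = (\<lambda>z. u * a z + (1 - u) * b z)" using uv by (auto simp: fun_eq_iff)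
    ultimately show "u *\<^sub>R a + v *\<^sub>R b \<in> C" by simp
  qed
  have far: "e \<le> Q (\<psi> - xs)" if psC: "\<psi> \<in> C" for \<psi>
  proof -
    obtain z where z: "z \<in> F" "e \<le> \<bar>xs z - \<psi> z\<bar>" using far0[OF psC] by blast
    have "\<bar>xs z - \<psi> z\<bar> = \<bar>(\<psi> - xs) z\<bar>" by simp
    also have "\<dots> \<le> Q (\<psi> - xs)" unfolding Q_def by (rule member_le_sum) (use z F in auto)
    finally show ?thesis using z by simp
  qed
  obtain L k \<theta> where L: "linear L" "\<And>z. \<bar>L z\<bar> \<le> k * Q z" "\<theta> > 0" "\<And>c. c \<in> C \<Longrightarrow> L c + \<theta> \<le> L xs"
    using separation[of Q C e xs, OF Qadd Qhom cvx F(2) far] by blast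
  define dl where "dl z = (\<lambda>u. if u = z then 1 else 0 :: real)" for z :: 'a
  define w where "w = (\<Sum>z\<in>F. L (dl z) *\<^sub>R z)"
  have rep: "L \<psi> = \<psi> w" if lin: "linear \<psi>" for \<psi>
  proof -
    define \<psi>' where "\<psi>' = (\<Sum>z\<in>F. \<psi> z *\<^sub>R dl z)"
    have "(\<psi> - \<psi>') u = 0" if "u \<in> F" for u
      using that F(1) unfolding \<psi>'_def dl_def by (simp add: sum_fun_apply if_distrib cong: if_cong)
    then have "Q (\<psi> - \<psi>') = 0" unfolding Q_def by simp
    then have "L (\<psi> - \<psi>') = 0" using L(2)[of "\<psi> - \<psi>'"] by simp
    then have "L \<psi> = L \<psi>'" using linear_diff[OF L(1)] by simp
    also have "L \<psi>' = (\<Sum>z\<in>F. \<psi> z * L (dl z))" unfolding \<psi>'_def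
      using linear_sum[OF L(1), of "\<lambda>z. \<psi> z *\<^sub>R dl z" F] linear_scale[OF L(1)] by simp
    also have "\<dots> = \<psi> w" unfolding w_def using linear_sum[OF lin, of "\<lambda>z. L (dl z) *\<^sub>R z" F] linear_scale[OF lin]
      by (simp add: mult.commute)
    finally show ?thesis .
  qed
  have linD: "\<phi> \<in> lc_dual P \<Longrightarrow> linear \<phi>" for \<phi> unfolding lc_dual_def by simp
  have "\<psi> w + \<theta> \<le> xs w" if "\<psi> \<in> C" for \<psi>
    using L(4)[OF that] rep[OF linD] that CD xs by auto
  then show ?thesis using L(3) by blast
qed

lemma cvx_ray:
  assumes cv: "convex_fun g" and gx: "g x \<le> ereal a" and g1: "g (x + s1 *\<^sub>R w) \<le> ereal (a + c * s1)"
    and s: "0 < s" "s \<le> s1"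
  shows "g (x + s *\<^sub>R w) \<le> ereal (a + c * s)"
proof -
  define u where "u = s / s1"
  have s1: "s1 > 0" using s by simp
  have u: "0 \<le> u" "u \<le> 1" "u * s1 = s" using s s1 u_def by auto
  have "g (u *\<^sub>R (x + s1 *\<^sub>R w) + (1 - u) *\<^sub>R x) \<le> ereal (u * (a + c * s1) + (1 - u) * a)"
    by (rule cvx_ereal[OF cv g1 gx u(1,2)])
  moreover have "u *\<^sub>R (x + s1 *\<^sub>R w) + (1 - u) *\<^sub>R x = x + s *\<^sub>R w"
    unfolding u(3)[symmetric] by (simp add: algebra_simps)
  moreover have "u * (a + c * s1) + (1 - u) * a = a + c * s" unfolding u(3)[symmetric] by (simp add: algebra_simps)
  ultimately show ?thesis by simp
qed

lemma dual_lin: "\<phi> \<in> lc_dual P \<Longrightarrow> linear \<phi>" unfolding lc_dual_def by simp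

lemma dual_comb:
  assumes lcs: "lcs P" and "\<phi> \<in> lc_dual P" "\<psi> \<in> lc_dual P"
  shows "(\<lambda>z. u * \<phi> z + v * \<psi> z) \<in> lc_dual P"
proof -
  have "\<exists>F k. finite F \<and> F \<subseteq> P \<and> (\<forall>z. \<bar>\<phi> z\<bar> \<le> k * (\<Sum>p\<in>F. p z))"
    using dual_bound[OF lcs assms(2)] by (rule conjunct2)
  then obtain F1 k1 where "finite F1 \<and> F1 \<subseteq> P \<and> (\<forall>z. \<bar>\<phi> z\<bar> \<le> k1 * (\<Sum>p\<in>F1. p z))"
    by (elim exE)
  then have h1b: "finite F1" "F1 \<subseteq> P" "\<And>z. \<bar>\<phi> z\<bar> \<le> k1 * (\<Sum>p\<in>F1. p z)"
    by auto
  have h1a: "linear \<phi>" using dual_bound[OF lcs assms(2)] by (rule conjunct1)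
  note 1 = h1a h1b
  have "\<exists>F k. finite F \<and> F \<subseteq> P \<and> (\<forall>z. \<bar>\<psi> z\<bar> \<le> k * (\<Sum>p\<in>F. p z))"
    using dual_bound[OF lcs assms(3)] by (rule conjunct2)
  then obtain F2 k2 where "finite F2 \<and> F2 \<subseteq> P \<and> (\<forall>z. \<bar>\<psi> z\<bar> \<le> k2 * (\<Sum>p\<in>F2. p z))"
    by (elim exE)
  then have h2b: "finite F2" "F2 \<subseteq> P" "\<And>z. \<bar>\<psi> z\<bar> \<le> k2 * (\<Sum>p\<in>F2. p z)"
    by auto
  have h2a: "linear \<psi>" using dual_bound[OF lcs assms(3)] by (rule conjunct1)
  note 2 = h2a h2b
  have snP: "seminorm p" if "p \<in> P" for p using lcs that unfolding lcs_def by blast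
  have sn: "\<forall>p\<in>F1 \<union> F2. seminorm p" using h1b(2) h2b(2) snP by blast
  have lin: "linear (\<lambda>z. u * \<phi> z + v * \<psi> z)"
  proof (rule linearI)
    fix a b show "u * \<phi> (a + b) + v * \<psi> (a + b) = u * \<phi> a + v * \<psi> a + (u * \<phi> b + v * \<psi> b)"
      using linear_add[OF 1(1)] linear_add[OF 2(1)] by (simp add: algebra_simps)
  next
    fix r b show "u * \<phi> (r *\<^sub>R b) + v * \<psi> (r *\<^sub>R b) = r *\<^sub>R (u * \<phi> b + v * \<psi> b)"
      using linear_scale[OF 1(1)] linear_scale[OF 2(1)] by (simp add: algebra_simps)
  qed
  have "\<bar>u * \<phi> z + v * \<psi> z\<bar> \<le> (\<bar>u\<bar> * \<bar>k1\<bar> + \<bar>v\<bar> * \<bar>k2\<bar>) * (\<Sum>p\<in>F1 \<union> F2. p z)" for z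
  proof -
    have s1: "(\<Sum>p\<in>F1. p z) \<le> (\<Sum>p\<in>F1 \<union> F2. p z)"
      using sn 1 2 by (intro sum_mono2) (auto simp: sn_nn)
    have s2: "(\<Sum>p\<in>F2. p z) \<le> (\<Sum>p\<in>F1 \<union> F2. p z)"
      using sn 1 2 by (intro sum_mono2) (auto simp: sn_nn)
    have n1: "0 \<le> (\<Sum>p\<in>F1. p z)" using sn by (intro sum_nonneg) (auto simp: sn_nn)
    have n2: "0 \<le> (\<Sum>p\<in>F2. p z)" using sn by (intro sum_nonneg) (auto simp: sn_nn)
    have "\<bar>u * \<phi> z + v * \<psi> z\<bar> \<le> \<bar>u\<bar> * \<bar>\<phi> z\<bar> + \<bar>v\<bar> * \<bar>\<psi> z\<bar>" using abs_triangle_ineq[of "u * \<phi> z" "v * \<psi> z"] by (simp add: abs_mult)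
    also have "\<dots> \<le> \<bar>u\<bar> * (\<bar>k1\<bar> * (\<Sum>p\<in>F1 \<union> F2. p z)) + \<bar>v\<bar> * (\<bar>k2\<bar> * (\<Sum>p\<in>F1 \<union> F2. p z))"
    proof (intro add_mono mult_left_mono)
      show "\<bar>\<phi> z\<bar> \<le> \<bar>k1\<bar> * (\<Sum>p\<in>F1 \<union> F2. p z)"
        using 1(4)[of z] mult_right_mono[OF abs_ge_self[of k1] n1] mult_left_mono[OF s1, of "\<bar>k1\<bar>"] by linarith
      show "\<bar>\<psi> z\<bar> \<le> \<bar>k2\<bar> * (\<Sum>p\<in>F1 \<union> F2. p z)"
        using 2(4)[of z] mult_right_mono[OF abs_ge_self[of k2] n2] mult_left_mono[OF s2, of "\<bar>k2\<bar>"] by linarith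
    qed auto
    finally show ?thesis by (simp add: algebra_simps)
  qed
  then show ?thesis using dual_intro[OF lcs lin, of "F1 \<union> F2"] 1 2 by blast
qed


lemma core_false:
  fixes ft :: "'i::topological_space \<Rightarrow> 'a::real_vector \<Rightarrow> ereal"
  assumes lcs: "lcs P"
    and ftp: "\<And>t. proper_fun (ft t)" and ftc: "\<And>t. convex_fun (ft t)" and ftl: "\<And>t. lc_lsc P (ft t)"
    and Tcomp: "compact (UNIV :: 'i set)"
    and usc: "\<And>z c. open {t. ft t z < c}"
    and rho: "\<And>t. 0 < \<rho> t"
    and fx: "(SUP t. ft t x) = ereal fx"
    and xs: "xs \<in> lc_dual P"
    and sub: "\<And>y. ereal fx + ereal (xs (y - x)) \<le> (SUP t. ft t y)"
    and e: "e > 0" and th: "\<theta> > 0"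
    and A: "\<And>t a. ft t x = ereal fx \<Longrightarrow> a \<in> eps_subdiff P e (ft t) x \<Longrightarrow> a w + \<theta> \<le> xs w"
    and B: "\<And>t b. ft t x \<noteq> ereal fx \<Longrightarrow> b \<in> eps_subdiff P e (\<lambda>y. ereal (\<rho> t) * ft t y) x \<Longrightarrow> e * b w + \<theta> \<le> xs w"
  shows False
proof -
  define c where "c = xs w - \<theta>/2"
  have ftx_le: "ft t x \<le> ereal fx" for t
  proof -
    have "ft t x \<le> (SUP t. ft t x)" by (rule SUP_upper) simp
    then show ?thesis using fx by simp
  qed
  have claim: "\<exists>s>0. ft t (x + s *\<^sub>R w) < ereal (fx + c * s)" for t
  proof (cases "ft t x = ereal fx")
    case True
    show ?thesis
    proof (rule ccontr)
      assume no: "\<not> (\<exists>s>0. ft t (x + s *\<^sub>R w) < ereal (fx + c * s))"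
      have ray: "ereal (fx + c * s) \<le> ft t (x + s *\<^sub>R w)" if "s > 0" for s
        using no that by (metis linorder_not_less)
      have th4: "\<theta>/4 > 0" using th by simp
      obtain a where a: "a \<in> lc_dual P" "c - \<theta>/4 \<le> a w" "\<forall>y. ft t x + ereal (a (y - x)) - ereal e \<le> ft t y"
        using hb_sub[OF lcs ftp ftc ftl True e th4 ray] by blast
      have "a \<in> eps_subdiff P e (ft t) x" unfolding eps_subdiff_def using True a(1) a(3) by simp
      then have "a w + \<theta> \<le> xs w" using A True by blast
      then show False using a(2) th unfolding c_def by simp
    qed
  next
    case False
    obtain g0 where g0: "ft t x = ereal g0"
      using ftp[of t] ftx_le[of t] unfolding proper_fun_def by (cases "ft t x") auto
    have g0lt: "g0 < fx" using ftx_le[of t] False g0 by simp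
    show ?thesis
    proof (cases "\<exists>s0>0. ft t (x + s0 *\<^sub>R w) \<noteq> \<infinity>")
      case True
      then obtain s0 where s0: "s0 > 0" "ft t (x + s0 *\<^sub>R w) \<noteq> \<infinity>" by blast
      then obtain gs where gs: "ft t (x + s0 *\<^sub>R w) = ereal gs"
        using ftp[of t] unfolding proper_fun_def by (cases "ft t (x + s0 *\<^sub>R w)") auto
      define D where "D = \<bar>gs - g0 - c * s0\<bar> + 1"
      have Dp: "D > 0" using D_def by (smt (verit) abs_ge_zero)
      define lam where "lam = min 1 ((fx - g0) / (2 * D))"
      have lp: "lam > 0" "lam \<le> 1" using Dp g0lt lam_def by auto
      have key: "lam * (gs - g0 - c * s0) < fx - g0"
      proof -
        have "lam * (gs - g0 - c * s0) \<le> lam * D"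
          using lp D_def by (intro mult_left_mono) auto
        also have "\<dots> \<le> (fx - g0) / (2 * D) * D" using Dp lam_def by (intro mult_right_mono) auto
        also have "\<dots> = (fx - g0) / 2" using Dp by simp
        also have "\<dots> < fx - g0" using g0lt by simp
        finally show ?thesis .
      qed
      have "ft t (lam *\<^sub>R (x + s0 *\<^sub>R w) + (1 - lam) *\<^sub>R x) \<le> ereal (lam * gs + (1 - lam) * g0)"
        using cvx_ereal[OF ftc, of t "x + s0 *\<^sub>R w" gs x g0 lam] gs g0 lp by simp
      moreover have "lam *\<^sub>R (x + s0 *\<^sub>R w) + (1 - lam) *\<^sub>R x = x + (lam * s0) *\<^sub>R w"
        by (simp add: algebra_simps)
      moreover have "lam * gs + (1 - lam) * g0 < fx + c * (lam * s0)" using key by (simp add: algebra_simps)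
      ultimately have "ft t (x + (lam * s0) *\<^sub>R w) \<le> ereal (lam * gs + (1 - lam) * g0)"
        "ereal (lam * gs + (1 - lam) * g0) < ereal (fx + c * (lam * s0))" by simp_all
      then have "ft t (x + (lam * s0) *\<^sub>R w) < ereal (fx + c * (lam * s0))" by (rule le_less_trans)
      moreover have "lam * s0 > 0" using lp s0 by simp
      ultimately show ?thesis by blast
    next
      case False
      then have inf: "ft t (x + s *\<^sub>R w) = \<infinity>" if "s > 0" for s using that by blast
      define R where "R = (\<bar>c\<bar> + 1) / (e * \<rho> t) + 1"
      have ep: "e / \<rho> t > 0" using e rho[of t] by simp
      have one: "(1::real) > 0" by simp
      have ray: "ereal (g0 + R * s) \<le> ft t (x + s *\<^sub>R w)" if "s > 0" for s using inf[OF that] by simp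
      obtain a where a: "a \<in> lc_dual P" "R - 1 \<le> a w" "\<forall>y. ft t x + ereal (a (y - x)) - ereal (e / \<rho> t) \<le> ft t y"
        using hb_sub[OF lcs ftp ftc ftl g0 ep one ray] by blast
      define b where "b = (\<lambda>z. \<rho> t * a z)"
      have bd: "b \<in> lc_dual P" using dual_comb[OF lcs a(1) a(1), of "\<rho> t" 0] unfolding b_def by simp
      have bsub: "ereal (\<rho> t) * ft t x + ereal (b (y - x)) - ereal e \<le> ereal (\<rho> t) * ft t y" for y
      proof (cases "ft t y")
        case (real m)
        have "ereal g0 + ereal (a (y - x)) - ereal (e / \<rho> t) \<le> ereal m" using a(3) g0 real by metis
        then have "g0 + a (y - x) - e / \<rho> t \<le> m" by simp
        then have "\<rho> t * (g0 + a (y - x) - e / \<rho> t) \<le> \<rho> t * m" using rho[of t] by (intro mult_left_mono) auto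
        then have "\<rho> t * g0 + b (y - x) - e \<le> \<rho> t * m" using rho[of t] unfolding b_def by (simp add: algebra_simps)
        then show ?thesis using g0 real by simp
      next
        case PInf then show ?thesis using rho[of t] by simp
      next
        case MInf then show ?thesis using ftp[of t] unfolding proper_fun_def by blast
      qed
      have "b \<in> eps_subdiff P e (\<lambda>y. ereal (\<rho> t) * ft t y) x"
        unfolding eps_subdiff_def using g0 bd bsub by simp
      then have "e * b w + \<theta> \<le> xs w" using B \<open>ft t x \<noteq> ereal fx\<close> by blast
      then have lt: "e * \<rho> t * a w < c" unfolding b_def c_def using th by (simp add: mult.assoc)
      have "e * \<rho> t * (R - 1) \<le> e * \<rho> t * a w" using a(2) e rho[of t] by (intro mult_left_mono) auto
      moreover have "e * \<rho> t * (R - 1) = \<bar>c\<bar> + 1" unfolding R_def using e rho[of t] by simp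
      ultimately show ?thesis using lt by simp
    qed
  qed
  have "\<forall>t. \<exists>s. s > 0 \<and> ft t (x + s *\<^sub>R w) < ereal (fx + c * s)" using claim by blast
  then obtain S where S: "\<And>t. S t > 0 \<and> ft t (x + S t *\<^sub>R w) < ereal (fx + c * S t)"
    by (metis choice)
  define U where "U t = {t'. ft t' (x + S t *\<^sub>R w) < ereal (fx + c * S t)}" for t
  have opU: "open (U t)" for t unfolding U_def by (rule usc)
  have cov: "(UNIV :: 'i set) \<subseteq> (\<Union>t\<in>UNIV. U t)" using S unfolding U_def by blast
  obtain C' where C': "C' \<subseteq> UNIV" "finite C'" "(UNIV :: 'i set) \<subseteq> (\<Union>t\<in>C'. U t)"
    using compactE_image[OF Tcomp opU cov] by blast
  have Cne: "C' \<noteq> {}" using C'(3) by blast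
  define s where "s = Min (S ` C')"
  have sC: "s \<in> S ` C'" unfolding s_def using C'(2) Cne by (intro Min_in) auto
  have sp: "s > 0" using sC S by auto
  have sle: "t \<in> C' \<Longrightarrow> s \<le> S t" for t unfolding s_def using C'(2) by (intro Min_le) auto
  have allt: "ft t' (x + s *\<^sub>R w) \<le> ereal (fx + c * s)" for t'
  proof -
    obtain t where t: "t \<in> C'" "t' \<in> U t" using C'(3) by blast
    then have "ft t' (x + S t *\<^sub>R w) \<le> ereal (fx + c * S t)" unfolding U_def by simp
    then show ?thesis using cvx_ray[OF ftc ftx_le[of t'] _ sp sle[OF t(1)]] by blast
  qed
  have "(SUP t. ft t (x + s *\<^sub>R w)) \<le> ereal (fx + c * s)" by (rule SUP_least) (use allt in auto)
  moreover have "ereal fx + ereal (xs ((x + s *\<^sub>R w) - x)) \<le> (SUP t. ft t (x + s *\<^sub>R w))" by (rule sub)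
  moreover have "xs ((x + s *\<^sub>R w) - x) = s * xs w" using linear_scale[OF dual_lin[OF xs]] by simp
  ultimately have "fx + s * xs w \<le> fx + c * s" by (metis order_trans plus_ereal.simps(1) ereal_less_eq(3))
  then have "s * (\<theta>/2) \<le> 0" unfolding c_def by (simp add: algebra_simps)
  then show False using sp th by (simp add: mult_le_0_iff)
qed

theorem theorem2:
  fixes P :: "('a::real_vector \<Rightarrow> real) set"
    and ft :: "'i::t2_space \<Rightarrow> 'a \<Rightarrow> ereal"
    and \<rho> :: "'i \<Rightarrow> real"
    and x :: 'a
  assumes lcs: "lcs P"
    and ft: "\<And>t. proper_fun (ft t) \<and> convex_fun (ft t) \<and> lc_lsc P (ft t)"
    and Tcomp: "compact (UNIV :: 'i set)"
    and usc: "\<And>z c. open {t. ft t z < c}"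
    and dom: "(SUP t. ft t x) < \<infinity>"
    and rho: "\<And>t. 0 < \<rho> t \<and> \<rho> t \<le> 1"
    and infb: "(INF t. ereal (\<rho> t) * ft t x) > -\<infinity>"
  shows "eps_subdiff P 0 (\<lambda>y. SUP t. ft t y) x \<subseteq>
           (\<Inter>e\<in>{e::real. e > 0}. wstar_clco P
              ((\<Union>t\<in>{t. ft t x = (SUP s. ft s x)}. eps_subdiff P e (ft t) x) \<union>
               (\<Union>t\<in>{t. ft t x \<noteq> (SUP s. ft s x)}.
                   fscale e (eps_subdiff P e (\<lambda>y. ereal (\<rho> t) * ft t y) x))))
       \<and> ((\<forall>y. (SUP t. ft t x) \<le> (SUP t. ft t y)) \<longrightarrow>
          eps_subdiff P 0 (\<lambda>y. SUP t. ft t y) x =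
           (\<Inter>e\<in>{e::real. e > 0}. wstar_clco P
              ((\<Union>t\<in>{t. ft t x = (SUP s. ft s x)}. eps_subdiff P e (ft t) x) \<union>
               (\<Union>t\<in>{t. ft t x \<noteq> (SUP s. ft s x)}.
                   fscale e (eps_subdiff P e (\<lambda>y. ereal (\<rho> t) * ft t y) x)))))"
proof -
  have ftp: "\<And>t. proper_fun (ft t)" and ftc: "\<And>t. convex_fun (ft t)" and ftl: "\<And>t. lc_lsc P (ft t)"
    using ft by blast+
  have rp: "\<And>t. 0 < \<rho> t" and r1: "\<And>t. \<rho> t \<le> 1" using rho by blast+
  have SUPge: "ft t z \<le> (SUP s. ft s z)" for t z by (rule SUP_upper) simp
  have SUPnm: "(SUP s. ft s z) \<noteq> -\<infinity>" for z
  proof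
    assume "(SUP s. ft s z) = -\<infinity>"
    then have "ft undefined z = -\<infinity>" using SUPge[of undefined z] by simp
    then show False using ftp[of undefined] unfolding proper_fun_def by blast
  qed
  obtain fx where fx: "(SUP t. ft t x) = ereal fx" using dom SUPnm[of x] by (cases "SUP t. ft t x") auto
  define A where "A e = (\<Union>t\<in>{t. ft t x = (SUP s. ft s x)}. eps_subdiff P e (ft t) x) \<union>
               (\<Union>t\<in>{t. ft t x \<noteq> (SUP s. ft s x)}.
                   fscale e (eps_subdiff P e (\<lambda>y. ereal (\<rho> t) * ft t y) x))" for e
  have part1: "eps_subdiff P 0 (\<lambda>y. SUP t. ft t y) x \<subseteq> (\<Inter>e\<in>{e::real. e > 0}. wstar_clco P (A e))"
  proof
    fix xs assume "xs \<in> eps_subdiff P 0 (\<lambda>y. SUP t. ft t y) x"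
    then have xs: "xs \<in> lc_dual P" and sub0: "\<And>y. (SUP t. ft t x) + ereal (xs (y - x)) - ereal 0 \<le> (SUP t. ft t y)"
      unfolding eps_subdiff_def using fx by auto
    have sub: "ereal fx + ereal (xs (y - x)) \<le> (SUP t. ft t y)" for y using sub0[of y] fx by simp
    show "xs \<in> (\<Inter>e\<in>{e::real. e > 0}. wstar_clco P (A e))"
    proof (intro INT_I)
      fix e :: real assume "e \<in> {e. e > 0}"
      then have e: "e > 0" by simp
      show "xs \<in> wstar_clco P (A e)" unfolding wstar_clco_def
      proof (intro InterI)
        fix C assume "C \<in> {C. fconvex C \<and> wstar_closed P C \<and> A e \<subseteq> C}"
        then have C: "fconvex C" "wstar_closed P C" "A e \<subseteq> C" by auto
        show "xs \<in> C"
        proof (rule ccontr)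
          assume "xs \<notin> C"
          then obtain w \<theta> where th: "\<theta> > 0" and sep: "\<And>\<psi>. \<psi> \<in> C \<Longrightarrow> \<psi> w + \<theta> \<le> xs w"
            using wstar_sep[OF xs C(1) C(2)] by blast
          show False
          proof (rule core_false[OF lcs ftp ftc ftl Tcomp usc rp fx xs sub e th])
            fix t a assume "ft t x = ereal fx" "a \<in> eps_subdiff P e (ft t) x"
            then have "a \<in> A e" unfolding A_def using fx by auto
            then show "a w + \<theta> \<le> xs w" using C(3) sep by blast
          next
            fix t b assume "ft t x \<noteq> ereal fx" "b \<in> eps_subdiff P e (\<lambda>y. ereal (\<rho> t) * ft t y) x"
            then have "(\<lambda>z. e * b z) \<in> A e" unfolding A_def fscale_def using fx by auto
            then show "e * b w + \<theta> \<le> xs w" using C(3) sep by fastforce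
          qed
        qed
      qed
    qed
  qed
  have part2: "(\<Inter>e\<in>{e::real. e > 0}. wstar_clco P (A e)) \<subseteq> eps_subdiff P 0 (\<lambda>y. SUP t. ft t y) x"
    if mn: "\<forall>y. (SUP t. ft t x) \<le> (SUP t. ft t y)"
  proof
    fix xs assume xsI: "xs \<in> (\<Inter>e\<in>{e::real. e > 0}. wstar_clco P (A e))"
    have "(INF t. ereal (\<rho> t) * ft t x) \<le> ereal (\<rho> undefined) * ft undefined x" by (rule INF_lower) simp
    also have "\<dots> < \<infinity>" using SUPge[of undefined x] fx SUPnm ftp[of undefined]
      unfolding proper_fun_def by (cases "ft undefined x") auto
    finally obtain m where m: "(INF t. ereal (\<rho> t) * ft t x) = ereal m"
      using infb by (cases "INF t. ereal (\<rho> t) * ft t x") auto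
    have claim: "xs \<in> lc_dual P \<and> xs (y - x) \<le> fy - fx + e + e * (\<bar>fy\<bar> + \<bar>m\<bar> + e)"
      if fy: "(SUP t. ft t y) = ereal fy" and e: "e > 0" for y fy e
    proof -
      define Bd where "Bd = fy - fx + e + e * (\<bar>fy\<bar> + \<bar>m\<bar> + e)"
      have fyx: "fx \<le> fy" using mn fx fy by (metis ereal_less_eq(3))
      have Bd1: "fy - fx + e \<le> Bd" using e unfolding Bd_def by (simp add: abs_ge_zero add_nonneg_nonneg)
      have Bd2: "e * (\<bar>fy\<bar> + \<bar>m\<bar> + e) \<le> Bd" using e fyx unfolding Bd_def by simp
      define S where "S = {\<psi> \<in> lc_dual P. \<psi> (y - x) \<le> Bd}"
      have "xs \<in> wstar_clco P (A e)" using xsI e by blast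
      moreover have "fconvex S" unfolding fconvex_def
      proof (intro ballI allI impI)
        fix \<phi> \<psi> :: "'a \<Rightarrow> real" and u :: real assume "\<phi> \<in> S" "\<psi> \<in> S" "0 \<le> u \<and> u \<le> 1"
        then have h: "\<phi> \<in> lc_dual P" "\<psi> \<in> lc_dual P" "\<phi> (y - x) \<le> Bd" "\<psi> (y - x) \<le> Bd" "0 \<le> u" "u \<le> 1"
          unfolding S_def by auto
        have "u * \<phi> (y - x) \<le> u * Bd" using h by (intro mult_left_mono) auto
        moreover have "(1 - u) * \<psi> (y - x) \<le> (1 - u) * Bd" using h by (intro mult_left_mono) auto
        ultimately have "u * \<phi> (y - x) + (1 - u) * \<psi> (y - x) \<le> Bd" by (simp add: algebra_simps)
        then show "(\<lambda>z. u * \<phi> z + (1 - u) * \<psi> z) \<in> S" unfolding S_def using dual_comb[OF lcs h(1,2)] by simp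
      qed
      moreover have "wstar_closed P S" unfolding wstar_closed_def
      proof (intro conjI ballI impI)
        show "S \<subseteq> lc_dual P" unfolding S_def by blast
      next
        fix \<phi> assume phi: "\<phi> \<in> lc_dual P"
          and ap: "\<forall>(F::'a set) e. finite F \<and> e > 0 \<longrightarrow> (\<exists>\<psi>\<in>S. \<forall>z\<in>F. \<bar>\<phi> z - \<psi> z\<bar> < e)"
        have "\<phi> (y - x) \<le> Bd"
        proof (rule field_le_epsilon)
          fix \<eta> :: real assume "\<eta> > 0"
          then obtain \<psi> where "\<psi> \<in> S" "\<bar>\<phi> (y - x) - \<psi> (y - x)\<bar> < \<eta>" using ap[rule_format, of "{y - x}" \<eta>] by auto
          then show "\<phi> (y - x) \<le> Bd + \<eta>" unfolding S_def by auto
        qed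
        then show "\<phi> \<in> S" unfolding S_def using phi by simp
      qed
      moreover have "A e \<subseteq> S"
      proof
        fix a assume "a \<in> A e"
        then consider (act) t where "ft t x = ereal fx" "a \<in> eps_subdiff P e (ft t) x"
          | (inact) t b where "ft t x \<noteq> ereal fx" "b \<in> eps_subdiff P e (\<lambda>y. ereal (\<rho> t) * ft t y) x"
              "a = (\<lambda>z. e * b z)"
          unfolding A_def fscale_def using fx by auto
        then show "a \<in> S"
        proof cases
          case act
          then have ad: "a \<in> lc_dual P" and ai: "ft t x + ereal (a (y - x)) - ereal e \<le> ft t y"
            unfolding eps_subdiff_def by auto
          have "ft t y \<le> ereal fy" using SUPge[of t y] fy by simp
          moreover have "ft t x + ereal (a (y - x)) - ereal e = ereal (fx + a (y - x) - e)" using act(1) by simp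
          ultimately have "ereal (fx + a (y - x) - e) \<le> ereal fy" using ai by (metis order_trans)
          then have "a (y - x) \<le> fy - fx + e" by simp
          then show ?thesis unfolding S_def using ad Bd1 by simp
        next
          case inact
          obtain g0 where g0: "ft t x = ereal g0" using SUPge[of t x] fx ftp[of t]
            unfolding proper_fun_def by (cases "ft t x") auto
          have bd: "b \<in> lc_dual P" and bi: "ereal (\<rho> t) * ft t x + ereal (b (y - x)) - ereal e \<le> ereal (\<rho> t) * ft t y"
            using inact(2) g0 unfolding eps_subdiff_def by auto
          obtain gy where gy: "ft t y = ereal gy" using SUPge[of t y] fy ftp[of t]
            unfolding proper_fun_def by (cases "ft t y") auto
          have gyf: "gy \<le> fy" using SUPge[of t y] fy gy by simp
          have "ereal m \<le> ereal (\<rho> t) * ft t x" unfolding m[symmetric] by (rule INF_lower) simp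
          then have mle: "m \<le> \<rho> t * g0" using g0 by simp
          have "\<rho> t * g0 + b (y - x) - e \<le> \<rho> t * gy" using bi g0 gy by simp
          moreover have "\<rho> t * gy \<le> \<bar>fy\<bar>"
          proof -
            have "\<rho> t * gy \<le> \<rho> t * fy" using gyf rp[of t] by (intro mult_left_mono) auto
            also have "\<dots> \<le> \<bar>\<rho> t * fy\<bar>" by simp
            also have "\<dots> = \<rho> t * \<bar>fy\<bar>" using rp[of t] by (simp add: abs_mult)
            also have "\<dots> \<le> 1 * \<bar>fy\<bar>" using r1[of t] by (intro mult_right_mono) auto
            finally show ?thesis by simp
          qed
          ultimately have "b (y - x) \<le> \<bar>fy\<bar> + \<bar>m\<bar> + e" using mle by linarith
          then have "e * b (y - x) \<le> e * (\<bar>fy\<bar> + \<bar>m\<bar> + e)" using e by (intro mult_left_mono) auto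
          moreover have "a \<in> lc_dual P" unfolding inact(3) using dual_comb[OF lcs bd bd, of e 0] by simp
          ultimately show ?thesis unfolding S_def inact(3) using Bd2 by simp
        qed
      qed
      ultimately have "xs \<in> S" unfolding wstar_clco_def by blast
      then show ?thesis unfolding S_def Bd_def by simp
    qed
    have xsd: "xs \<in> lc_dual P" using claim[OF fx, of 1] by simp
    have "(SUP t. ft t x) + ereal (xs (y - x)) - ereal 0 \<le> (SUP t. ft t y)" for y
    proof (cases "(SUP t. ft t y) = \<infinity>")
      case True then show ?thesis by simp
    next
      case False
      then obtain fy where fy: "(SUP t. ft t y) = ereal fy" using SUPnm[of y] by (cases "SUP t. ft t y") auto
      have "xs (y - x) \<le> fy - fx"
      proof (rule field_le_epsilon)
        fix \<tau> :: real assume tau: "\<tau> > 0"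
        define K where "K = 2 + \<bar>fy\<bar> + \<bar>m\<bar>"
        have Kp: "K > 0" unfolding K_def by (smt (verit) abs_ge_zero)
        define e where "e = min 1 (\<tau> / K)"
        have ep: "e > 0" "e \<le> 1" "e \<le> \<tau> / K" using tau Kp e_def by auto
        have "xs (y - x) \<le> fy - fx + e + e * (\<bar>fy\<bar> + \<bar>m\<bar> + e)" using claim[OF fy ep(1)] by simp
        moreover have "e + e * (\<bar>fy\<bar> + \<bar>m\<bar> + e) \<le> e * K"
          unfolding K_def using ep by (simp add: algebra_simps mult_left_le)
        moreover have "e * K \<le> \<tau>" using ep(3) Kp by (simp add: le_divide_eq)
        ultimately show "xs (y - x) \<le> fy - fx + \<tau>" by linarith
      qed
      then show ?thesis using fx fy by simp
    qed
    then show "xs \<in> eps_subdiff P 0 (\<lambda>y. SUP t. ft t y) x" unfolding eps_subdiff_def using fx xsd by simp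
  qed
  show ?thesis using part1 part2 unfolding A_def by blast
qed

end
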